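(* Fix integers $\delta,r,t$ with $0\le\delta\le d$ and $0\le r,t\le d-\delta$. Let $(A;\{E_i\}_{i=0}^\delta;A^*;\{E^*_i\}_{i=0}^\delta)$ be a tridiagonal system over $\mathbb{F}$ on a vector space $V$, with eigenvalue sequence $\theta_t,\theta_{t+1},\dots,\theta_{t+\delta}$ and dual eigenvalue sequence $\theta^*_r,\theta^*_{r+1},\dots,\theta^*_{r+\delta}$. Then there exists a $T$-module structure on $V$ such that (i) $a$ acts as $A$ and $a^*$ acts as $A^*$; (ii) for $0\le i\le d$, $e_i$ acts as $E_{i-t}$ if $t\le i\le t+\delta$ and as $0$ otherwise; (iii) for $0\le i\le d$, $e^*_i$ acts as $E^*_{i-r}$ if $r\le i\le r+\delta$ and as $0$ otherwise. This $T$-module is irreducible.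
   Context: $\mathbb{F}$ is a field, $d\ge0$, and $\{\theta_i\}_{i=0}^d$, $\{\theta^*_i\}_{i=0}^d$ are scalars in $\mathbb{F}$ with $\theta_i\ne\theta_j$, $\theta^*_i\ne\theta^*_j$ for $i\ne j$, such that $\frac{\theta_{i-2}-\theta_{i+1}}{\theta_{i-1}-\theta_i}$ and $\frac{\theta^*_{i-2}-\theta^*_{i+1}}{\theta^*_{i-1}-\theta^*_i}$ are equal and independent of $i$ for $2\le i\le d-1$. $T$ is the associative $\mathbb{F}$-algebra with $1$ generated by $a,e_0,\dots,e_d,a^*,e^*_0,\dots,e^*_d$ with relations $e_ie_j=\delta_{ij}e_i$, $e^*_ie^*_j=\delta_{ij}e^*_i$, $\sum_ie_i=\sum_ie^*_i=1$, $a=\sum_i\theta_ie_i$, $a^*=\sum_i\theta^*_ie^*_i$, and $e^*_ia^ke^*_j=0$, $e_i{a^*}^ke_j=0$ whenever $0\le i,j,k\le d$ and $k<|i-j|$. Tridiagonal pair on a finite-dimensional nonzero space $V$: diagonalizable linear maps $A,A^*$ such that some ordering $V_0,\dots,V_\delta$ of the eigenspaces of $A$ satisfies $A^*V_i\subseteq V_{i-1}+V_i+V_{i+1}$, some ordering $V^*_0,\dots,V^*_\delta$ of the eigenspaces of $A^*$ satisfies $AV^*_i\subseteq V^*_{i-1}+V^*_i+V^*_{i+1}$ (out-of-range terms zero), and no subspace $W\ne0,V$ is invariant under both (such orderings are standard). A tridiagonal system $(A;\{E_i\}_{i=0}^\delta;A^*;\{E^*_i\}_{i=0}^\delta)$ is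 a tridiagonal pair with standard orderings of the primitive idempotents of $A$ and $A^*$; its eigenvalue sequence lists the eigenvalue of $A$ on $E_iV$, and its dual eigenvalue sequence the eigenvalue of $A^*$ on $E^*_iV$. *)

theory Defs
  imports Complex_Main
begin

definition fin_dim_vs :: "('f::field \<Rightarrow> 'v::ab_group_add \<Rightarrow> 'v) \<Rightarrow> bool" where
  "fin_dim_vs scale \<longleftrightarrow> vector_space scale \<and>
     (\<exists>B. finite B \<and> module.span scale B = (UNIV :: 'v set)) \<and> (\<exists>v::'v. v \<noteq> 0)"

definition param_ok :: "nat \<Rightarrow> (nat \<Rightarrow> 'f::field) \<Rightarrow> (nat \<Rightarrow> 'f) \<Rightarrow> bool" where
  "param_ok d th ths \<longleftrightarrow>
     (\<forall>i\<le>d. \<forall>j\<le>d. i \<noteq> j \<longrightarrow> th i \<noteq> th j) \<and>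
     (\<forall>i\<le>d. \<forall>j\<le>d. i \<noteq> j \<longrightarrow> ths i \<noteq> ths j) \<and>
     (\<exists>c. \<forall>i. 2 \<le> i \<and> i + 1 \<le> d \<longrightarrow>
          (th (i-2) - th (i+1)) / (th (i-1) - th i) = c \<and>
          (ths (i-2) - ths (i+1)) / (ths (i-1) - ths i) = c)"

definition prim_idems :: "('f::field \<Rightarrow> 'v::ab_group_add \<Rightarrow> 'v) \<Rightarrow> nat \<Rightarrow> ('v \<Rightarrow> 'v)
     \<Rightarrow> (nat \<Rightarrow> 'v \<Rightarrow> 'v) \<Rightarrow> (nat \<Rightarrow> 'f) \<Rightarrow> bool" where
  "prim_idems scale \<delta> A E th \<longleftrightarrow>
     Vector_Spaces.linear scale scale A \<and>
     (\<forall>i\<le>\<delta>. Vector_Spaces.linear scale scale (E i) \<and> (\<exists>v. E i v \<noteq> 0)) \<and>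
     (\<forall>i\<le>\<delta>. \<forall>j\<le>\<delta>. \<forall>v. E i (E j v) = (if i = j then E i v else 0)) \<and>
     (\<forall>v. (\<Sum>i\<le>\<delta>. E i v) = v) \<and>
     (\<forall>v. A v = (\<Sum>i\<le>\<delta>. scale (th i) (E i v))) \<and>
     (\<forall>i\<le>\<delta>. \<forall>j\<le>\<delta>. i \<noteq> j \<longrightarrow> th i \<noteq> th j)"

definition nbr :: "nat \<Rightarrow> (nat \<Rightarrow> 'v \<Rightarrow> 'v::ab_group_add) \<Rightarrow> nat \<Rightarrow> 'v set" where
  "nbr \<delta> E i = {x + y + z | x y z.
      x \<in> (if 0 < i then range (E (i - 1)) else {0}) \<and>
      y \<in> range (E i) \<and>
      z \<in> (if i + 1 \<le> \<delta> then range (E (i + 1)) else {0})}"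

definition tridiagonal_system :: "('f::field \<Rightarrow> 'v::ab_group_add \<Rightarrow> 'v) \<Rightarrow> nat
     \<Rightarrow> ('v \<Rightarrow> 'v) \<Rightarrow> (nat \<Rightarrow> 'v \<Rightarrow> 'v) \<Rightarrow> ('v \<Rightarrow> 'v) \<Rightarrow> (nat \<Rightarrow> 'v \<Rightarrow> 'v)
     \<Rightarrow> (nat \<Rightarrow> 'f) \<Rightarrow> (nat \<Rightarrow> 'f) \<Rightarrow> bool" where
  "tridiagonal_system scale \<delta> A E As Es th ths \<longleftrightarrow>
     fin_dim_vs scale \<and>
     prim_idems scale \<delta> A E th \<and> prim_idems scale \<delta> As Es ths \<and>
     (\<forall>i\<le>\<delta>. As ` range (E i) \<subseteq> nbr \<delta> E i) \<and>
     (\<forall>i\<le>\<delta>. A ` range (Es i) \<subseteq> nbr \<delta> Es i) \<and>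
     (\<forall>W. module.subspace scale W \<and> A ` W \<subseteq> W \<and> As ` W \<subseteq> W \<longrightarrow>
          W = {0} \<or> W = UNIV)"

text \<open>A T-module structure on V: images a, e_i, a*, e*_i (i \<le> d) of the generators
  of T as linear maps of V satisfying the defining relations of T (by the
  universal property of the presentation this is the same as an algebra
  homomorphism T \<rightarrow> End(V)).\<close>
definition T_module :: "('f::field \<Rightarrow> 'v::ab_group_add \<Rightarrow> 'v) \<Rightarrow> nat \<Rightarrow> (nat \<Rightarrow> 'f) \<Rightarrow> (nat \<Rightarrow> 'f)
     \<Rightarrow> ('v \<Rightarrow> 'v) \<Rightarrow> (nat \<Rightarrow> 'v \<Rightarrow> 'v) \<Rightarrow> ('v \<Rightarrow> 'v) \<Rightarrow> (nat \<Rightarrow> 'v \<Rightarrow> 'v) \<Rightarrow> bool" where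
  "T_module scale d th ths a e as es \<longleftrightarrow>
     Vector_Spaces.linear scale scale a \<and> Vector_Spaces.linear scale scale as \<and>
     (\<forall>i\<le>d. Vector_Spaces.linear scale scale (e i) \<and> Vector_Spaces.linear scale scale (es i)) \<and>
     (\<forall>i\<le>d. \<forall>j\<le>d. \<forall>v. e i (e j v) = (if i = j then e i v else 0)) \<and>
     (\<forall>i\<le>d. \<forall>j\<le>d. \<forall>v. es i (es j v) = (if i = j then es i v else 0)) \<and>
     (\<forall>v. (\<Sum>i\<le>d. e i v) = v) \<and> (\<forall>v. (\<Sum>i\<le>d. es i v) = v) \<and>
     (\<forall>v. a v = (\<Sum>i\<le>d. scale (th i) (e i v))) \<and>
     (\<forall>v. as v = (\<Sum>i\<le>d. scale (ths i) (es i v))) \<and>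
     (\<forall>i\<le>d. \<forall>j\<le>d. \<forall>k\<le>d. int k < \<bar>int i - int j\<bar> \<longrightarrow>
        (\<forall>v. es i ((a ^^ k) (es j v)) = 0) \<and> (\<forall>v. e i ((as ^^ k) (e j v)) = 0))"

definition T_irreducible :: "('f::field \<Rightarrow> 'v::ab_group_add \<Rightarrow> 'v) \<Rightarrow> nat
     \<Rightarrow> ('v \<Rightarrow> 'v) \<Rightarrow> (nat \<Rightarrow> 'v \<Rightarrow> 'v) \<Rightarrow> ('v \<Rightarrow> 'v) \<Rightarrow> (nat \<Rightarrow> 'v \<Rightarrow> 'v) \<Rightarrow> bool" where
  "T_irreducible scale d a e as es \<longleftrightarrow> (\<exists>v::'v. v \<noteq> 0) \<and>
     (\<forall>W. module.subspace scale W \<and> a ` W \<subseteq> W \<and> as ` W \<subseteq> W \<and>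
          (\<forall>i\<le>d. e i ` W \<subseteq> W \<and> es i ` W \<subseteq> W) \<longrightarrow> W = {0} \<or> W = UNIV)"

end

theory Submission
  imports Defs
begin


lemma lin_add: "Vector_Spaces.linear s s f \<Longrightarrow> f (x+y) = f x + f y"
  by (rule module_hom.add[OF module_hom_linearI])
lemma lin_0: "Vector_Spaces.linear s s f \<Longrightarrow> f 0 = 0"
  by (rule module_hom.zero[OF module_hom_linearI])
lemma lin_sum: "Vector_Spaces.linear s s f \<Longrightarrow> f (sum g S) = (\<Sum>a\<in>S. f (g a))"
  by (rule module_hom.sum[OF module_hom_linearI])
lemma lin_pow0: "Vector_Spaces.linear s s f \<Longrightarrow> (f ^^ k) 0 = 0"
  by (induction k) (auto simp: lin_0)

lemma nbr_kill:
  assumes lin: "\<forall>i\<le>\<delta>. Vector_Spaces.linear s s (F i)"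
  and orth: "\<forall>i\<le>\<delta>. \<forall>j\<le>\<delta>. \<forall>v. F i (F j v) = (if i=j then F i v else 0)"
  and m: "m \<le> \<delta>" "l \<le> \<delta>" "1 < \<bar>int m - int l\<bar>" and w: "w \<in> nbr \<delta> F l"
  shows "F m w = 0"
proof -
  obtain x y z where w: "w = x + y + z" and x: "x \<in> (if 0 < l then range (F (l - 1)) else {0})"
    and y: "y \<in> range (F l)" and z: "z \<in> (if l + 1 \<le> \<delta> then range (F (l + 1)) else {0})"
    using w unfolding nbr_def by blast
  have F0: "F m 0 = 0" using lin m lin_0 by blast
  have "F m x = 0"
  proof (cases "0 < l")
    case True
    then obtain u where u: "x = F (l - 1) u" using x by auto
    have "m \<noteq> l - 1" "l - 1 \<le> \<delta>" using m True by auto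
    then show ?thesis using u orth m(1) by simp
  next
    case False
    then show ?thesis using x F0 by simp
  qed
  moreover have "F m y = 0"
  proof -
    obtain u where u: "y = F l u" using y by auto
    have "m \<noteq> l" using m by auto
    then show ?thesis using u orth m(1,2) by simp
  qed
  moreover have "F m z = 0"
  proof (cases "l + 1 \<le> \<delta>")
    case True
    then obtain u where u: "z = F (l + 1) u" using z by auto
    have "m \<noteq> l + 1" using m True by auto
    then show ?thesis using u orth m(1) True by simp
  next
    case False
    then show ?thesis using z F0 by simp
  qed
  moreover have "F m w = F m x + F m y + F m z"
    using w lin_add[of s "F m"] lin m(1) by simp
  ultimately show ?thesis by simp
qed

lemma key:
  fixes F :: "nat \<Rightarrow> 'v::ab_group_add \<Rightarrow> 'v"
  assumes lin: "\<forall>i\<le>\<delta>. Vector_Spaces.linear s s (F i)" and linB: "Vector_Spaces.linear s s B"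
  and orth: "\<forall>i\<le>\<delta>. \<forall>j\<le>\<delta>. \<forall>v. F i (F j v) = (if i=j then F i v else 0)"
  and sum1: "\<forall>v. (\<Sum>i\<le>\<delta>. F i v) = v"
  and tri: "\<forall>i\<le>\<delta>. B ` range (F i) \<subseteq> nbr \<delta> F i"
  and j: "j \<le> \<delta>"
  shows "\<forall>l\<le>\<delta>. int k < \<bar>int l - int j\<bar> \<longrightarrow> F l ((B^^k) (F j v)) = 0"
proof (induction k)
  case 0
  then show ?case using orth j by auto
next
  case (Suc k)
  define x where "x = (B^^k) (F j v)"
  have IH: "\<forall>l\<le>\<delta>. int k < \<bar>int l - int j\<bar> \<longrightarrow> F l x = 0" using Suc x_def by simp
  show ?case
  proof (intro allI impI)
    fix m assume m: "m \<le> \<delta>" "int (Suc k) < \<bar>int m - int j\<bar>"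
    have "B x = B (\<Sum>l\<le>\<delta>. F l x)" using sum1 by simp
    also have "\<dots> = (\<Sum>l\<le>\<delta>. B (F l x))" by (rule lin_sum[OF linB])
    finally have "F m (B x) = F m (\<Sum>l\<le>\<delta>. B (F l x))" by simp
    also have "\<dots> = (\<Sum>l\<le>\<delta>. F m (B (F l x)))" using lin m(1) lin_sum[of s "F m"] by blast
    also have "\<dots> = 0"
    proof (rule sum.neutral, intro ballI)
      fix l assume l: "l \<in> {..\<delta>}"
      show "F m (B (F l x)) = 0"
      proof (cases "int k < \<bar>int l - int j\<bar>")
        case True
        have "F m 0 = 0" using lin m lin_0 by blast
        then show ?thesis using IH l True lin_0[OF linB] by auto
      next
        case False
        hence "1 < \<bar>int m - int l\<bar>" using m by linarith
        moreover have "B (F l x) \<in> nbr \<delta> F l"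
        proof -
          have "l \<le> \<delta>" using l by simp
          moreover have "B (F l x) \<in> B ` range (F l)" by simp
          ultimately show ?thesis using tri by blast
        qed
        ultimately show ?thesis using nbr_kill[OF lin orth] m l by auto
      qed
    qed
    finally show "F m ((B ^^ Suc k) (F j v)) = 0" by (simp add: x_def)
  qed
qed

lemma shift_sum:
  fixes g :: "nat \<Rightarrow> 'a::comm_monoid_add"
  assumes "t + \<delta> \<le> d" "\<forall>i. i \<le> d \<and> \<not>(t \<le> i \<and> i \<le> t + \<delta>) \<longrightarrow> g i = 0"
  shows "sum g {..d} = (\<Sum>l\<le>\<delta>. g (t + l))"
proof -
  have "sum g {..d} = sum g {t..t+\<delta>}"
    by (rule sum.mono_neutral_right) (use assms in auto)
  also have "\<dots> = (\<Sum>l\<le>\<delta>. g (t + l))"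
    using sum.shift_bounds_cl_nat_ivl[of g 0 t \<delta>] by (simp add: atLeast0AtMost add.commute)
  finally show ?thesis .
qed


lemma vs_zero: "vector_space s \<Longrightarrow> s c 0 = 0"
  using module.scale_zero_right module_iff_vector_space by metis

lemma lin_zero: "vector_space s \<Longrightarrow> Vector_Spaces.linear s s (\<lambda>v. 0)"
  by (rule linear_module_homI) (simp add: module_hom_def module_hom_axioms_def module_iff_vector_space vs_zero)

lemma shifted:
  fixes scale :: "'f::field \<Rightarrow> 'v::ab_group_add \<Rightarrow> 'v"
  assumes vs: "vector_space scale" and td: "t + \<delta> \<le> d"
  and P: "prim_idems scale \<delta> A E (\<lambda>i. th (t + i))"
  and tri: "\<forall>i\<le>\<delta>. B ` range (E i) \<subseteq> nbr \<delta> E i"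
  and linB: "Vector_Spaces.linear scale scale B"
  and e_def: "e = (\<lambda>i. if t \<le> i \<and> i \<le> t + \<delta> then E (i - t) else (\<lambda>v. 0))"
  shows "(\<forall>i\<le>d. Vector_Spaces.linear scale scale (e i)) \<and>
     (\<forall>i\<le>d. \<forall>j\<le>d. \<forall>v. e i (e j v) = (if i = j then e i v else 0)) \<and>
     (\<forall>v. (\<Sum>i\<le>d. e i v) = v) \<and>
     (\<forall>v. A v = (\<Sum>i\<le>d. scale (th i) (e i v))) \<and>
     (\<forall>i\<le>d. \<forall>j\<le>d. \<forall>k\<le>d. int k < \<bar>int i - int j\<bar> \<longrightarrow> (\<forall>v. e i ((B ^^ k) (e j v)) = 0))"
proof -
  have linA: "Vector_Spaces.linear scale scale A"
   and lin: "\<forall>i\<le>\<delta>. Vector_Spaces.linear scale scale (E i)"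
   and orth: "\<forall>i\<le>\<delta>. \<forall>j\<le>\<delta>. \<forall>v. E i (E j v) = (if i = j then E i v else 0)"
   and sum1: "\<forall>v. (\<Sum>i\<le>\<delta>. E i v) = v"
   and Aeq: "\<forall>v. A v = (\<Sum>i\<le>\<delta>. scale (th (t+i)) (E i v))"
    using P unfolding prim_idems_def by auto
  have E0: "\<forall>i\<le>\<delta>. E i 0 = 0" using lin lin_0 by blast
  have L: "\<forall>i\<le>d. Vector_Spaces.linear scale scale (e i)"
    using lin lin_zero[OF vs] by (auto simp: e_def)
  have O: "\<forall>i\<le>d. \<forall>j\<le>d. \<forall>v. e i (e j v) = (if i = j then e i v else 0)"
  proof (intro allI impI)
    fix i j v assume "i \<le> d" "j \<le> d"
    show "e i (e j v) = (if i = j then e i v else 0)"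
    proof (cases "t \<le> i \<and> i \<le> t + \<delta>")
      case True
      then show ?thesis
      proof (cases "t \<le> j \<and> j \<le> t + \<delta>")
        case True2: True
        have "i - t \<le> \<delta>" "j - t \<le> \<delta>" using True True2 by auto
        moreover have "(i - t = j - t) = (i = j)" using True True2 by auto
        ultimately show ?thesis using orth True True2 by (simp add: e_def)
      next
        case False
        then show ?thesis using True E0 by (auto simp: e_def)
      qed
    qed (auto simp: e_def)
  qed
  have S: "\<forall>v. (\<Sum>i\<le>d. e i v) = v"
  proof
    fix v
    have "(\<Sum>i\<le>d. e i v) = (\<Sum>l\<le>\<delta>. e (t + l) v)"
      by (rule shift_sum[OF td]) (auto simp: e_def)
    also have "\<dots> = (\<Sum>l\<le>\<delta>. E l v)" by (rule sum.cong) (auto simp: e_def)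
    finally show "(\<Sum>i\<le>d. e i v) = v" using sum1 by simp
  qed
  have AA: "\<forall>v. A v = (\<Sum>i\<le>d. scale (th i) (e i v))"
  proof
    fix v
    have "(\<Sum>i\<le>d. scale (th i) (e i v)) = (\<Sum>l\<le>\<delta>. scale (th (t+l)) (e (t + l) v))"
      by (rule shift_sum[OF td]) (auto simp: e_def vs_zero[OF vs])
    also have "\<dots> = (\<Sum>l\<le>\<delta>. scale (th (t+l)) (E l v))" by (rule sum.cong) (auto simp: e_def)
    finally show "A v = (\<Sum>i\<le>d. scale (th i) (e i v))" using Aeq by simp
  qed
  have R: "\<forall>i\<le>d. \<forall>j\<le>d. \<forall>k\<le>d. int k < \<bar>int i - int j\<bar> \<longrightarrow> (\<forall>v. e i ((B ^^ k) (e j v)) = 0)"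
  proof (intro allI impI)
    fix i j k v assume ij: "i \<le> d" "j \<le> d" "k \<le> d" "int k < \<bar>int i - int j\<bar>"
    show "e i ((B ^^ k) (e j v)) = 0"
    proof (cases "t \<le> i \<and> i \<le> t + \<delta>")
      case True
      then show ?thesis
      proof (cases "t \<le> j \<and> j \<le> t + \<delta>")
        case True2: True
        have "j - t \<le> \<delta>" using True2 by auto
        note K = key[OF lin linB orth sum1 tri this, rule_format, of "i - t" k v]
        have "int k < \<bar>int (i - t) - int (j - t)\<bar>" using ij True True2 by auto
        then show ?thesis using K True True2 by (auto simp: e_def)
      next
        case False
        then show ?thesis using True E0 lin_pow0[OF linB] by (auto simp: e_def)
      qed
    qed (auto simp: e_def)
  qed
  show ?thesis using L O S AA R by blast
qed

theorem proposition5p5: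
  fixes scale :: "'f::field \<Rightarrow> 'v::ab_group_add \<Rightarrow> 'v"
    and d \<delta> r t :: nat
    and th ths :: "nat \<Rightarrow> 'f"
    and A As :: "'v \<Rightarrow> 'v" and E Es :: "nat \<Rightarrow> 'v \<Rightarrow> 'v"
  assumes "param_ok d th ths"
    and "\<delta> \<le> d" and "r \<le> d - \<delta>" and "t \<le> d - \<delta>"
    and "tridiagonal_system scale \<delta> A E As Es (\<lambda>i. th (t + i)) (\<lambda>i. ths (r + i))"
  shows "\<exists>a e as es.
     T_module scale d th ths a e as es \<and>
     a = A \<and> as = As \<and>
     (\<forall>i\<le>d. e i = (if t \<le> i \<and> i \<le> t + \<delta> then E (i - t) else (\<lambda>v. 0))) \<and>
     (\<forall>i\<le>d. es i = (if r \<le> i \<and> i \<le> r + \<delta> then Es (i - r) else (\<lambda>v. 0))) \<and>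
     T_irreducible scale d a e as es"
proof -
  have TS: "fin_dim_vs scale \<and>
     prim_idems scale \<delta> A E (\<lambda>i. th (t + i)) \<and> prim_idems scale \<delta> As Es (\<lambda>i. ths (r + i)) \<and>
     (\<forall>i\<le>\<delta>. As ` range (E i) \<subseteq> nbr \<delta> E i) \<and>
     (\<forall>i\<le>\<delta>. A ` range (Es i) \<subseteq> nbr \<delta> Es i) \<and>
     (\<forall>W. module.subspace scale W \<and> A ` W \<subseteq> W \<and> As ` W \<subseteq> W \<longrightarrow>
          W = {0} \<or> W = UNIV)"
    using assms(5) unfolding tridiagonal_system_def .
  then have FD: "fin_dim_vs scale"
   and P1: "prim_idems scale \<delta> A E (\<lambda>i. th (t + i))"
   and P2: "prim_idems scale \<delta> As Es (\<lambda>i. ths (r + i))"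
   and tri1: "\<forall>i\<le>\<delta>. As ` range (E i) \<subseteq> nbr \<delta> E i"
   and tri2: "\<forall>i\<le>\<delta>. A ` range (Es i) \<subseteq> nbr \<delta> Es i"
   and irr: "\<forall>W. module.subspace scale W \<and> A ` W \<subseteq> W \<and> As ` W \<subseteq> W \<longrightarrow> W = {0} \<or> W = UNIV"
    by - (elim conjE; assumption)+
  have vs: "vector_space scale" and nz: "\<exists>v::'v. v \<noteq> 0"
    using FD unfolding fin_dim_vs_def by blast+
  have linA: "Vector_Spaces.linear scale scale A" using P1 unfolding prim_idems_def by blast
  have linAs: "Vector_Spaces.linear scale scale As" using P2 unfolding prim_idems_def by blast
  define e where "e = (\<lambda>i. if t \<le> i \<and> i \<le> t + \<delta> then E (i - t) else (\<lambda>v::'v. 0))"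
  define es where "es = (\<lambda>i. if r \<le> i \<and> i \<le> r + \<delta> then Es (i - r) else (\<lambda>v::'v. 0))"
  have td: "t + \<delta> \<le> d" "r + \<delta> \<le> d" using assms(2-4) by auto
  note H1 = shifted[OF vs td(1) P1 tri1 linAs e_def]
  note H2 = shifted[OF vs td(2) P2 tri2 linA es_def]
  from H1 have a1: "\<forall>i\<le>d. Vector_Spaces.linear scale scale (e i)"
    and a2: "\<forall>i\<le>d. \<forall>j\<le>d. \<forall>v. e i (e j v) = (if i = j then e i v else 0)"
    and a3: "\<forall>v. (\<Sum>i\<le>d. e i v) = v"
    and a4: "\<forall>v. A v = (\<Sum>i\<le>d. scale (th i) (e i v))"
    and a5: "\<forall>i\<le>d. \<forall>j\<le>d. \<forall>k\<le>d. int k < \<bar>int i - int j\<bar> \<longrightarrow> (\<forall>v. e i ((As ^^ k) (e j v)) = 0)"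
    by - (elim conjE; assumption)+
  from H2 have b1: "\<forall>i\<le>d. Vector_Spaces.linear scale scale (es i)"
    and b2: "\<forall>i\<le>d. \<forall>j\<le>d. \<forall>v. es i (es j v) = (if i = j then es i v else 0)"
    and b3: "\<forall>v. (\<Sum>i\<le>d. es i v) = v"
    and b4: "\<forall>v. As v = (\<Sum>i\<le>d. scale (ths i) (es i v))"
    and b5: "\<forall>i\<le>d. \<forall>j\<le>d. \<forall>k\<le>d. int k < \<bar>int i - int j\<bar> \<longrightarrow> (\<forall>v. es i ((A ^^ k) (es j v)) = 0)"
    by - (elim conjE; assumption)+
  have c1: "\<forall>i\<le>d. Vector_Spaces.linear scale scale (e i) \<and> Vector_Spaces.linear scale scale (es i)"
    using a1 b1 by blast
  have c2: "\<forall>i\<le>d. \<forall>j\<le>d. \<forall>k\<le>d. int k < \<bar>int i - int j\<bar> \<longrightarrow>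
        (\<forall>v. es i ((A ^^ k) (es j v)) = 0) \<and> (\<forall>v. e i ((As ^^ k) (e j v)) = 0)"
    using a5 b5 by blast
  have "T_module scale d th ths A e As es"
    unfolding T_module_def using linA linAs c1 a2 b2 a3 b3 a4 b4 c2 by (intro conjI)
  moreover have "T_irreducible scale d A e As es"
    unfolding T_irreducible_def
  proof (rule conjI[OF nz], intro allI impI)
    fix W assume "module.subspace scale W \<and> A ` W \<subseteq> W \<and> As ` W \<subseteq> W \<and>
          (\<forall>i\<le>d. e i ` W \<subseteq> W \<and> es i ` W \<subseteq> W)"
    hence "module.subspace scale W \<and> A ` W \<subseteq> W \<and> As ` W \<subseteq> W" by (elim conjE) (intro conjI)
    thus "W = {0} \<or> W = UNIV" using irr by (elim allE impE)
  qed
  moreover have "\<forall>i\<le>d. e i = (if t \<le> i \<and> i \<le> t + \<delta> then E (i - t) else (\<lambda>v. 0))"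
    unfolding e_def by (intro allI impI) (rule refl)
  moreover have "\<forall>i\<le>d. es i = (if r \<le> i \<and> i \<le> r + \<delta> then Es (i - r) else (\<lambda>v. 0))"
    unfolding es_def by (intro allI impI) (rule refl)
  ultimately show ?thesis
    by (intro exI[of _ A] exI[of _ e] exI[of _ As] exI[of _ es] conjI refl)
qed

end
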